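(* For every positive integer $N$ there exists a real symmetric nonnegative matrix $A$ of rank $3$ having exactly one negative eigenvalue (counted with multiplicity) whose nonnegative rank exceeds $N$.
   Context: The nonnegative rank of an $m\times n$ matrix $A$ with nonnegative real entries is the smallest integer $r$ such that $A=UV$ for some $m\times r$ matrix $U$ and $r\times n$ matrix $V$, both with nonnegative real entries. *)

theory Defs
  imports "Jordan_Normal_Form.DL_Rank" "Jordan_Normal_Form.Char_Poly"
begin

definition nonneg_mat :: "real mat \<Rightarrow> bool" where
  "nonneg_mat A \<longleftrightarrow> (\<forall>i < dim_row A. \<forall>j < dim_col A. A $$ (i, j) \<ge> 0)"

definition nonneg_rank :: "real mat \<Rightarrow> nat" where
  "nonneg_rank A = (LEAST r. \<exists>U V. U \<in> carrier_mat (dim_row A) r \<and> V \<in> carrier_mat r (dim_col A)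
      \<and> nonneg_mat U \<and> nonneg_mat V \<and> A = U * V)"

definition real_rank :: "real mat \<Rightarrow> nat" where
  "real_rank A = vec_space.rank (dim_row A) A"

definition num_neg_eigenvalues :: "real mat \<Rightarrow> nat" where
  "num_neg_eigenvalues A = (\<Sum>x\<in>{x. x < 0 \<and> eigenvalue A x}. order x (char_poly A))"

end

theory Submission imports Defs "Jordan_Normal_Form.DL_Rank_Submatrix" begin

definition tv :: "nat \<Rightarrow> real" where
  "tv i = (if i = 0 then 0 else if odd i then real ((i+1) div 2) else - real (i div 2))"

definition pt :: "nat \<Rightarrow> nat" where
  "pt i = (if i = 0 then 0 else if odd i then i+1 else i-1)"

lemma tv_pt: "tv (pt i) = - tv i"
proof (cases "i = 0")
  case False
  show ?thesis
  proof (cases "odd i")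
    case True
    then obtain b where "i = 2*b+1" by (auto elim!: oddE)
    then show ?thesis unfolding tv_def pt_def by auto
  next
    case F: False
    then obtain b where b: "i = 2*b" by (auto elim!: evenE)
    with False have "b > 0" by auto
    then have "i - 1 = 2*(b-1)+1" using b by auto
    then show ?thesis using False F b \<open>b>0\<close> unfolding tv_def pt_def by auto
  qed
qed (auto simp: tv_def pt_def)

lemma pt_less: "i < 2*m+1 \<Longrightarrow> pt i < 2*m+1"
  unfolding pt_def by (auto elim!: oddE)

lemma tv_inj: "tv i = tv j \<Longrightarrow> i = j"
  unfolding tv_def by (auto split: if_splits elim!: oddE evenE)

lemma tv_0: "tv 0 = 0" and tv_1: "tv 1 = 1" and tv_2: "tv 2 = -1" and tv_S0: "tv (Suc 0) = 1"
  unfolding tv_def by auto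

lemma sum_poly4:
  "(\<Sum>i<2*m+1. a + b*tv i + c*tv i^2 + d*tv i^3 + e*tv i^4)
    = a*(2*m+1) + 2*c*(\<Sum>k=1..m. real k^2) + 2*e*(\<Sum>k=1..m. real k^4)"
proof (induction m)
  case 0
  then show ?case by (simp add: tv_0)
next
  case (Suc m)
  have t1: "tv (2*m+1) = real m + 1" and t2: "tv (2*m+2) = - (real m + 1)"
    unfolding tv_def by auto
  have "{..<2*Suc m+1} = insert (2*m+2) (insert (2*m+1) {..<2*m+1})" by auto
  then have "(\<Sum>i<2*Suc m+1. a + b*tv i + c*tv i^2 + d*tv i^3 + e*tv i^4)
    = (a + b*tv (2*m+2) + c*tv (2*m+2)^2 + d*tv (2*m+2)^3 + e*tv (2*m+2)^4)
     + (a + b*tv (2*m+1) + c*tv (2*m+1)^2 + d*tv (2*m+1)^3 + e*tv (2*m+1)^4)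
     + (\<Sum>i<2*m+1. a + b*tv i + c*tv i^2 + d*tv i^3 + e*tv i^4)" by (simp add: ring_distribs)
  also have "\<dots> = a*(2*Suc m+1) + 2*c*(\<Sum>k=1..Suc m. real k^2) + 2*e*(\<Sum>k=1..Suc m. real k^4)"
    unfolding Suc t1 t2 by (simp add: algebra_simps power2_eq_square power3_eq_cube power4_eq_xxxx)
  finally show ?case .
qed

lemma S2: "(\<Sum>k=1..m. real k^2) = real m*(m+1)*(2*m+1)/6"
  by (induction m) (auto simp: algebra_simps power2_eq_square)
lemma S4: "(\<Sum>k=1..m. real k^4) = real m*(m+1)*(2*m+1)*(3*(real m)^2+3*m-1)/30"
  by (induction m) (auto simp: algebra_simps power2_eq_square power4_eq_xxxx)

definition Amat :: "nat \<Rightarrow> real mat" where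
  "Amat m = mat (2*m+1) (2*m+1) (\<lambda>(i,j). (tv i + tv j)^2)"

lemma Amat_index: "i < 2*m+1 \<Longrightarrow> j < 2*m+1 \<Longrightarrow> Amat m $$ (i,j) = (tv i + tv j)^2"
  and Amat_carrier: "Amat m \<in> carrier_mat (2*m+1) (2*m+1)"
  unfolding Amat_def by auto

lemma mult_entry:
  assumes "U \<in> carrier_mat n r" "V \<in> carrier_mat r n'" "i < n" "k < n'"
  shows "(U*V) $$ (i,k) = (\<Sum>l<r. U$$(i,l) * V$$(l,k))"
  using assms by (auto simp: scalar_prod_def lessThan_atLeast0 intro!: sum.cong)

lemma nr_bound:
  assumes U: "U \<in> carrier_mat (2*m+1) r" and V: "V \<in> carrier_mat r (2*m+1)"
    and nU: "nonneg_mat U" and nV: "nonneg_mat V" and A: "Amat m = U*V"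
  shows "2*m+1 \<le> 2^r"
proof -
  let ?n = "2*m+1"
  define S where "S i = {l. l<r \<and> U$$(i,l) > 0}" for i
  have Uge: "U$$(i,l) \<ge> 0" if "i < ?n" "l < r" for i l using nU U that unfolding nonneg_mat_def by auto
  have Vge: "V$$(l,k) \<ge> 0" if "k < ?n" "l < r" for k l using nV V that unfolding nonneg_mat_def by auto
  have Aent: "(tv i + tv k)^2 = (\<Sum>l<r. U$$(i,l) * V$$(l,k))" if "i < ?n" "k < ?n" for i k
  proof -
    have "(tv i + tv k)^2 = Amat m $$ (i,k)" using that unfolding Amat_def by simp
    also have "\<dots> = (\<Sum>l<r. U$$(i,l) * V$$(l,k))" unfolding A by (rule mult_entry[OF U V that])
    finally show ?thesis .
  qed
  have inj: "inj_on S {..<?n}"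
  proof (rule inj_onI, rule ccontr)
    fix i j assume i: "i \<in> {..<?n}" and j: "j \<in> {..<?n}" and eq: "S i = S j" and ne: "i \<noteq> j"
    let ?k = "pt i"
    have k: "?k < ?n" using pt_less i by auto
    have "(\<Sum>l<r. U$$(i,l) * V$$(l,?k)) = 0" using Aent[OF _ k, of i] i by (simp add: tv_pt)
    then have z: "U$$(i,l) * V$$(l,?k) = 0" if "l < r" for l
      using sum_nonneg_eq_0_iff[of "{..<r}" "\<lambda>l. U$$(i,l) * V$$(l,?k)"] that Uge Vge i k
      by (auto intro: mult_nonneg_nonneg)
    have "U$$(j,l) * V$$(l,?k) = 0" if "l < r" for l
    proof (cases "U$$(j,l) > 0")
      case True
      then have "l \<in> S i" using eq that unfolding S_def by auto
      then have "U$$(i,l) > 0" unfolding S_def by auto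
      then show ?thesis using z[OF that] by simp
    next
      case False
      then have "U$$(j,l) = 0" using Uge[OF _ that, of j] j by auto
      then show ?thesis by simp
    qed
    then have "(\<Sum>l<r. U$$(j,l) * V$$(l,?k)) = 0" by (intro sum.neutral) auto
    then have "(tv j + tv ?k)^2 = 0" using Aent[OF _ k, of j] j by simp
    then have "tv j = tv i" by (simp add: tv_pt)
    then show False using tv_inj ne by auto
  qed
  have "S ` {..<?n} \<subseteq> Pow {..<r}" unfolding S_def by auto
  then have "card {..<?n} \<le> card (Pow {..<r::nat})"
    using card_inj_on_le[OF inj] by auto
  then show ?thesis by (simp add: card_Pow)
qed

lemma det2: assumes "A \<in> carrier_mat 2 2"
  shows "det A = A$$(0,0)*A$$(1,1) - A$$(0,1)*A$$(1,0)"
proof -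
  have "det A = (\<Sum>i<2. A $$ (i,0) * cofactor A i 0)" using laplace_expansion_column[OF assms, of 0] by simp
  also have "\<dots> = A$$(0,0)*A$$(1,1) - A$$(0,1)*A$$(1,0)"
    using assms by (simp add: cofactor_def mat_delete_def det_single numeral_2_eq_2 lessThan_Suc)
  finally show ?thesis .
qed

lemma det2m: "det (mat 2 2 f) = f(0,0)*f(1,1) - f(0,1)*f(1,0)"
  by (subst det2) auto

lemma det3: assumes "A \<in> carrier_mat 3 3"
  shows "det A = A$$(0,0)*(A$$(1,1)*A$$(2,2) - A$$(1,2)*A$$(2,1))
     - A$$(1,0)*(A$$(0,1)*A$$(2,2) - A$$(0,2)*A$$(2,1))
     + A$$(2,0)*(A$$(0,1)*A$$(1,2) - A$$(0,2)*A$$(1,1))"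
proof -
  have "det A = (\<Sum>i<3. A $$ (i,0) * cofactor A i 0)" using laplace_expansion_column[OF assms, of 0] by simp
  also have "\<dots> = A$$(0,0)*(A$$(1,1)*A$$(2,2) - A$$(1,2)*A$$(2,1))
     - A$$(1,0)*(A$$(0,1)*A$$(2,2) - A$$(0,2)*A$$(2,1))
     + A$$(2,0)*(A$$(0,1)*A$$(1,2) - A$$(0,2)*A$$(1,1))"
    using assms by (simp add: cofactor_def det2m mat_delete_def lessThan_nat_numeral) (simp add: numeral_2_eq_2 algebra_simps)
  finally show ?thesis .
qed

lemma rank_le3: "vec_space.rank (2*m+1) (Amat m) \<le> 3"
proof -
  let ?n = "2*m+1"
  define M1 where "M1 = mat ?n ?n (\<lambda>(i,j). tv i^2 * 1)"
  define M2 where "M2 = mat ?n ?n (\<lambda>(i,j). (1::real) * tv j^2)"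
  define M3 where "M3 = mat ?n ?n (\<lambda>(i,j). (2*tv i) * tv j)"
  have c: "M1 \<in> carrier_mat ?n ?n" "M2 \<in> carrier_mat ?n ?n" "M3 \<in> carrier_mat ?n ?n"
    unfolding M1_def M2_def M3_def by auto
  have eq: "Amat m = M1 + M2 + M3" unfolding Amat_def M1_def M2_def M3_def
    by (rule eq_matI) (auto simp: power2_eq_square algebra_simps)
  have r1: "vec_space.rank ?n M1 \<le> 1"
    by (rule vec_space.rank_le_1_product_entries[OF c(1), where f="\<lambda>i. tv i^2" and g="\<lambda>j. 1"]) (auto simp: M1_def)
  have r2: "vec_space.rank ?n M2 \<le> 1"
    by (rule vec_space.rank_le_1_product_entries[OF c(2), where g="\<lambda>j. tv j^2" and f="\<lambda>j. 1"]) (auto simp: M2_def)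
  have r3: "vec_space.rank ?n M3 \<le> 1"
    by (rule vec_space.rank_le_1_product_entries[OF c(3), where f="\<lambda>i. 2*tv i" and g="\<lambda>j. tv j"]) (auto simp: M3_def)
  have "vec_space.rank ?n (M1 + M2 + M3) \<le> vec_space.rank ?n (M1 + M2) + vec_space.rank ?n M3"
    by (rule vec_space.rank_subadditive) (use c in auto)
  also have "\<dots> \<le> vec_space.rank ?n M1 + vec_space.rank ?n M2 + vec_space.rank ?n M3"
    using vec_space.rank_subadditive[OF c(1) c(2)] by simp
  finally show ?thesis using eq r1 r2 r3 by simp
qed

lemma pick3: "(i::nat) < 3 \<Longrightarrow> pick {0,1,2} i = i"
proof -
  assume i: "i < 3"
  have "card {a\<in>{0,1,2::nat}. a < i} = i"
  proof -
    have "{a\<in>{0,1,2::nat}. a < i} = {..<i}" using i by auto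
    then show ?thesis by simp
  qed
  moreover have "i \<in> {0,1,2}" using i by auto
  ultimately show ?thesis using pick_card_in_set[of i "{0,1,2}"] by simp
qed

lemma rank_ge3: assumes "m > 0" shows "3 \<le> vec_space.rank (2*m+1) (Amat m)"
proof -
  let ?n = "2*m+1"
  let ?I = "{0,1,2::nat}"
  have cI: "{j. j < ?n \<and> j \<in> ?I} = ?I" using assms by auto
  have c3: "card {j. j < dim_row (Amat m) \<and> j \<in> ?I} = 3" "card {j. j < dim_col (Amat m) \<and> j \<in> ?I} = 3"
    unfolding Amat_def by (simp_all only: dim_row_mat dim_col_mat cI) simp_all
  have S: "submatrix (Amat m) ?I ?I = mat 3 3 (\<lambda>(i,j). (tv i + tv j)^2)"
  proof (rule eq_matI)
    fix i j assume i: "i < dim_row (mat 3 3 (\<lambda>(i,j). (tv i + tv j)^2))" and j: "j < dim_col (mat 3 3 (\<lambda>(i,j). (tv i + tv j)^2))"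
    then have i3: "i < 3" and j3: "j < 3" by auto
    have "submatrix (Amat m) ?I ?I $$ (i,j) = Amat m $$ (pick ?I i, pick ?I j)"
      by (rule submatrix_index) (simp_all only: c3 i3 j3)
    also have "pick ?I i = i" by (rule pick3[OF i3])
    also have "pick ?I j = j" by (rule pick3[OF j3])
    finally show "submatrix (Amat m) ?I ?I $$ (i,j) = mat 3 3 (\<lambda>(i,j). (tv i + tv j)^2) $$ (i,j)"
      using assms i3 j3 by (auto simp: Amat_def)
  qed (simp_all only: dim_submatrix c3 dim_row_mat dim_col_mat)
  have "det (submatrix (Amat m) ?I ?I) = -8"
    unfolding S by (subst det3) (auto simp: tv_0 tv_1 tv_2 tv_S0)
  then have "det (submatrix (Amat m) ?I ?I) \<noteq> 0" by simp
  moreover have "Amat m \<in> carrier_mat ?n ?n" by (simp add: Amat_def)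
  ultimately have "card {j. j < ?n \<and> j \<in> ?I} \<le> vec_space.rank ?n (Amat m)"
    using vec_space.rank_gt_minor by blast
  then show ?thesis unfolding cI by simp
qed

definition L :: "nat \<Rightarrow> real \<Rightarrow> real" where
  "L p x = (if p = 0 then 1 - x^2 else if p = 1 then (x^2+x)/2 else (x^2-x)/2)"

lemma interp: "(x + s)^2 = L 0 x * (tv 0 + s)^2 + L 1 x * (tv 1 + s)^2 + L 2 x * (tv 2 + s)^2"
  by (simp add: L_def tv_0 tv_1 tv_2 tv_S0 power2_eq_square field_simps)

lemma L_tv: "p < 3 \<Longrightarrow> k < 3 \<Longrightarrow> L p (tv k) = (if p = k then 1 else 0)"
  by (auto simp: L_def tv_def less_Suc_eq numeral_3_eq_3)

lemma sum_lt3: fixes n :: nat and g :: "nat \<Rightarrow> real" assumes "3 \<le> n" shows "(\<Sum>k<n. if k < 3 then g k else 0) = g 0 + g 1 + (g 2 :: real)"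
proof -
  have "(\<Sum>k<n. if k < 3 then g k else 0) = (\<Sum>k\<in>{..<n} \<inter> {k. k < 3}. g k)"
    by (simp add: sum.If_cases)
  also have "{..<n} \<inter> {k. k < 3} = {0,1,2}" using assms by auto
  finally show ?thesis by simp
qed

definition Pm :: "nat \<Rightarrow> real mat" where
  "Pm n = mat n n (\<lambda>(k,j). (if k = j then 1 else 0) + (if k < 3 \<and> 3 \<le> j then - L k (tv j) else 0))"
definition Qm :: "nat \<Rightarrow> real mat" where
  "Qm n = mat n n (\<lambda>(k,j). (if k = j then 1 else 0) - (if k < 3 \<and> 3 \<le> j then - L k (tv j) else 0))"

lemma PQ: "Pm n * Qm n = 1\<^sub>m n"
proof (rule eq_matI)
  fix i j assume "i < dim_row (1\<^sub>m n)" "j < dim_col (1\<^sub>m n)"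
  then have ij: "i < n" "j < n" by auto
  have "(Pm n * Qm n) $$ (i,j) = (\<Sum>k<n. Pm n $$ (i,k) * Qm n $$ (k,j))"
    by (rule mult_entry[of _ n n _ n]) (auto simp: Pm_def Qm_def ij)
  also have "\<dots> = (\<Sum>k<n. ((if i = k then 1 else 0) + (if i < 3 \<and> 3 \<le> k then - L i (tv k) else 0))
       * ((if k = j then 1 else 0) - (if k < 3 \<and> 3 \<le> j then - L k (tv j) else 0)))"
    by (rule sum.cong) (auto simp: Pm_def Qm_def ij)
  also have "\<dots> = (\<Sum>k<n. (if i = k then (if k = j then 1 else 0) - (if k < 3 \<and> 3 \<le> j then - L k (tv j) else 0) else 0)
      + (if k = j then (if i < 3 \<and> 3 \<le> k then - L i (tv k) else 0) else 0))"
    by (rule sum.cong) auto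
  also have "\<dots> = 1\<^sub>m n $$ (i,j)" using ij by (simp add: sum.distrib)
  finally show "(Pm n * Qm n) $$ (i,j) = 1\<^sub>m n $$ (i,j)" .
qed (auto simp: Pm_def Qm_def)

lemma QP: "Qm n * Pm n = 1\<^sub>m n"
proof (rule eq_matI)
  fix i j assume "i < dim_row (1\<^sub>m n)" "j < dim_col (1\<^sub>m n)"
  then have ij: "i < n" "j < n" by auto
  have "(Qm n * Pm n) $$ (i,j) = (\<Sum>k<n. Qm n $$ (i,k) * Pm n $$ (k,j))"
    by (rule mult_entry[of _ n n _ n]) (auto simp: Pm_def Qm_def ij)
  also have "\<dots> = (\<Sum>k<n. ((if i = k then 1 else 0) - (if i < 3 \<and> 3 \<le> k then - L i (tv k) else 0))
       * ((if k = j then 1 else 0) + (if k < 3 \<and> 3 \<le> j then - L k (tv j) else 0)))"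
    by (rule sum.cong) (auto simp: Pm_def Qm_def ij)
  also have "\<dots> = (\<Sum>k<n. (if i = k then (if k = j then 1 else 0) + (if k < 3 \<and> 3 \<le> j then - L k (tv j) else 0) else 0)
      - (if k = j then (if i < 3 \<and> 3 \<le> k then - L i (tv k) else 0) else 0))"
    by (rule sum.cong) auto
  also have "\<dots> = 1\<^sub>m n $$ (i,j)" using ij by (simp add: sum_subtractf)
  finally show "(Qm n * Pm n) $$ (i,j) = 1\<^sub>m n $$ (i,j)" .
qed (auto simp: Pm_def Qm_def)

definition Cm :: "nat \<Rightarrow> real mat" where
  "Cm n = mat n n (\<lambda>(i,j). if j < 3 then (tv i + tv j)^2 else 0)"

lemma AP: assumes "m > 0" shows "Amat m * Pm (2*m+1) = Cm (2*m+1)"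
proof (rule eq_matI)
  let ?n = "2*m+1"
  have n3: "3 \<le> ?n" using assms by auto
  fix i j assume "i < dim_row (Cm ?n)" "j < dim_col (Cm ?n)"
  then have ij: "i < ?n" "j < ?n" by (auto simp: Cm_def)
  have "(Amat m * Pm ?n) $$ (i,j) = (\<Sum>k<?n. Amat m $$ (i,k) * Pm ?n $$ (k,j))"
    by (rule mult_entry[of _ ?n ?n _ ?n]) (use ij Amat_carrier in \<open>auto simp: Pm_def\<close>)
  also have "\<dots> = (\<Sum>k<?n. (if k = j then (tv i + tv k)^2 else 0) +
        (if k < 3 then (if 3 \<le> j then - L k (tv j) * (tv k + tv i)^2 else 0) else 0))"
    by (rule sum.cong) (use ij in \<open>auto simp: Pm_def Amat_index algebra_simps\<close>)
  also have "\<dots> = (tv i + tv j)^2 + (\<Sum>k<?n. if k < 3 then (if 3 \<le> j then - L k (tv j) * (tv k + tv i)^2 else 0) else 0)"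
    using ij by (simp add: sum.distrib)
  also have "\<dots> = Cm ?n $$ (i,j)"
    unfolding sum_lt3[OF n3] using ij interp[of "tv j" "tv i"]
    by (auto simp: Cm_def algebra_simps)
  finally show "(Amat m * Pm ?n) $$ (i,j) = Cm ?n $$ (i,j)" .
qed (auto simp: Cm_def Amat_def Pm_def)

definition Bm :: "nat \<Rightarrow> real mat" where
  "Bm n = mat n n (\<lambda>(i,j). if 3 \<le> j then 0 else if i < 3 then (\<Sum>k<n. L i (tv k) * (tv k + tv j)^2)
      else (tv i + tv j)^2)"

lemma QC: assumes "3 \<le> n" shows "Qm n * Cm n = Bm n"
proof (rule eq_matI)
  fix i j assume "i < dim_row (Bm n)" "j < dim_col (Bm n)"
  then have ij: "i < n" "j < n" by (auto simp: Bm_def)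
  have "(Qm n * Cm n) $$ (i,j) = (\<Sum>k<n. Qm n $$ (i,k) * Cm n $$ (k,j))"
    by (rule mult_entry[of _ n n _ n]) (auto simp: Qm_def Cm_def ij)
  also have "\<dots> = (\<Sum>k<n. (if k = i then Cm n $$ (k,j) else 0) +
        (if k < 3 then 0 else (if i < 3 then L i (tv k) * Cm n $$ (k,j) else 0)))"
    by (rule sum.cong) (auto simp: Qm_def ij algebra_simps)
  also have "\<dots> = Cm n $$ (i,j) + (\<Sum>k<n. (if k < 3 then 0 else (if i < 3 then L i (tv k) * Cm n $$ (k,j) else 0)))"
    using ij by (simp add: sum.distrib)
  also have "\<dots> = Bm n $$ (i,j)"
  proof (cases "3 \<le> j")
    case True
    then show ?thesis using ij by (auto simp: Cm_def Bm_def intro!: sum.neutral)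
  next
    case False
    show ?thesis
    proof (cases "i < 3")
      case True
      have split: "(\<Sum>k<n. L i (tv k) * (tv k + tv j)^2) = (\<Sum>k<n. if k < 3 then L i (tv k) * (tv k + tv j)^2 else 0)
          + (\<Sum>k<n. if k < 3 then 0 else L i (tv k) * (tv k + tv j)^2)"
        by (subst sum.distrib[symmetric]) (rule sum.cong, auto)
      have s3: "(\<Sum>k<n. if k < 3 then L i (tv k) * (tv k + tv j)^2 else 0) = (tv i + tv j)^2"
        unfolding sum_lt3[OF assms] using True by (auto simp: L_tv less_Suc_eq numeral_3_eq_3)
      have "(\<Sum>k<n. (if k < 3 then 0 else (if i < 3 then L i (tv k) * Cm n $$ (k,j) else 0)))
          = (\<Sum>k<n. if k < 3 then 0 else L i (tv k) * (tv k + tv j)^2)"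
        using True False by (intro sum.cong) (auto simp: Cm_def)
      then show ?thesis using True False ij split s3 by (simp add: Cm_def Bm_def)
    next
      case F: False
      then show ?thesis using False ij by (simp add: Cm_def Bm_def)
    qed
  qed
  finally show "(Qm n * Cm n) $$ (i,j) = Bm n $$ (i,j)" .
qed (auto simp: Qm_def Cm_def Bm_def)

lemma sim: assumes "m > 0" shows "similar_mat (Amat m) (Bm (2*m+1))"
proof -
  let ?n = "2*m+1"
  have n3: "3 \<le> ?n" using assms by auto
  have cP: "Pm ?n \<in> carrier_mat ?n ?n" and cQ: "Qm ?n \<in> carrier_mat ?n ?n" and cB: "Bm ?n \<in> carrier_mat ?n ?n"
    by (auto simp: Pm_def Qm_def Bm_def)
  have B: "Bm ?n = Qm ?n * (Amat m * Pm ?n)" using AP[OF assms] QC[OF n3] by simp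
  have cX: "Amat m * Pm ?n \<in> carrier_mat ?n ?n" using Amat_carrier cP by (rule mult_carrier_mat)
  have "Pm ?n * Bm ?n * Qm ?n = ((Pm ?n * Qm ?n) * (Amat m * Pm ?n)) * Qm ?n"
    unfolding B by (subst assoc_mult_mat[symmetric, OF cP cQ cX]) rule
  also have "\<dots> = (Amat m * Pm ?n) * Qm ?n" unfolding PQ using left_mult_one_mat[OF cX] by simp
  also have "\<dots> = Amat m * (Pm ?n * Qm ?n)" by (rule assoc_mult_mat[OF Amat_carrier cP cQ])
  also have "\<dots> = Amat m" unfolding PQ by (rule right_mult_one_mat[OF Amat_carrier])
  finally have eq: "Amat m = Pm ?n * Bm ?n * Qm ?n" by simp
  show ?thesis by (rule similar_matI[OF _ PQ QP eq]) (use cP cQ cB Amat_carrier in auto)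
qed

lemma char_poly_block: assumes A1: "A1 \<in> carrier_mat k k" and A3: "A3 \<in> carrier_mat l k"
  and A4: "A4 \<in> carrier_mat l l"
  shows "char_poly (four_block_mat A1 (0\<^sub>m k l) A3 A4) = char_poly A1 * char_poly (A4 :: real mat)"
proof -
  let ?cm = "\<lambda> A. [:0, 1:] \<cdot>\<^sub>m 1\<^sub>m (dim_row A) + map_mat (\<lambda>a. [:- a:]) A"
  let ?B3 = "map_mat (\<lambda>a. [:- a:]) A3"
  have "char_poly (four_block_mat A1 (0\<^sub>m k l) A3 A4) = det (?cm (four_block_mat A1 (0\<^sub>m k l) A3 A4))"
    unfolding char_poly_defs by simp
  also have "?cm (four_block_mat A1 (0\<^sub>m k l) A3 A4) = four_block_mat (?cm A1) (0\<^sub>m k l) ?B3 (?cm A4)"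
    by (rule eq_matI, insert A1 A3 A4, auto simp: one_poly_def)
  also have "det \<dots> = det (?cm A1) * det (?cm A4)"
    by (rule det_four_block_mat_upper_right_zero[of _ k _ l], insert A1 A3 A4, auto)
  also have "\<dots> = char_poly A1 * char_poly A4" unfolding char_poly_defs ..
  finally show ?thesis .
qed

lemma char_poly_zero: "char_poly (0\<^sub>m l l :: real mat) = [:0,1:]^l"
proof -
  have "char_poly (0\<^sub>m l l :: real mat) = (\<Prod>a\<leftarrow>diag_mat (0\<^sub>m l l :: real mat). [:- a, 1:])"
    by (rule char_poly_upper_triangular[of _ l]) (auto simp: upper_triangular_def)
  also have "diag_mat (0\<^sub>m l l :: real mat) = replicate l 0"
    by (rule nth_equalityI) (auto simp: diag_mat_def)
  finally show ?thesis by (simp add: prod_list_replicate)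
qed

definition sP :: "nat \<Rightarrow> real" where "sP m = 2 * (\<Sum>k=1..m. real k^2)"
definition sQ :: "nat \<Rightarrow> real" where "sQ m = 2 * (\<Sum>k=1..m. real k^4)"

lemma sumL0: "(\<Sum>k<2*m+1. L 0 (tv k) * (tv k + s)^2) = s^2*(2*m+1) + (1 - s^2)*sP m - sQ m"
proof -
  have "(\<Sum>k<2*m+1. L 0 (tv k) * (tv k + s)^2) =
     (\<Sum>k<2*m+1. s^2 + (2*s)*tv k + (1-s^2)*tv k^2 + (-2*s)*tv k^3 + (-1)*tv k^4)"
    by (rule sum.cong) (auto simp: L_def power2_eq_square power3_eq_cube power4_eq_xxxx algebra_simps)
  also have "\<dots> = s^2*(2*m+1) + (1 - s^2)*sP m - sQ m"
    unfolding sum_poly4 sP_def sQ_def by (simp add: algebra_simps)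
  finally show ?thesis .
qed

lemma sumL1: "(\<Sum>k<2*m+1. L 1 (tv k) * (tv k + s)^2) = (s^2+2*s)/2*sP m + sQ m/2"
proof -
  have "(\<Sum>k<2*m+1. L 1 (tv k) * (tv k + s)^2) =
     (\<Sum>k<2*m+1. 0 + (s^2/2)*tv k + ((s^2+2*s)/2)*tv k^2 + ((2*s+1)/2)*tv k^3 + (1/2)*tv k^4)"
    by (rule sum.cong) (auto simp: L_def power2_eq_square power3_eq_cube power4_eq_xxxx field_simps)
  also have "\<dots> = (s^2+2*s)/2*sP m + sQ m/2"
    unfolding sum_poly4 sP_def sQ_def by (simp add: algebra_simps)
  finally show ?thesis .
qed

lemma sumL2: "(\<Sum>k<2*m+1. L 2 (tv k) * (tv k + s)^2) = (s^2-2*s)/2*sP m + sQ m/2"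
proof -
  have "(\<Sum>k<2*m+1. L 2 (tv k) * (tv k + s)^2) =
     (\<Sum>k<2*m+1. 0 + (-(s^2)/2)*tv k + ((s^2-2*s)/2)*tv k^2 + ((2*s-1)/2)*tv k^3 + (1/2)*tv k^4)"
    by (rule sum.cong) (auto simp: L_def power2_eq_square power3_eq_cube power4_eq_xxxx field_simps)
  also have "\<dots> = (s^2-2*s)/2*sP m + sQ m/2"
    unfolding sum_poly4 sP_def sQ_def by (simp add: algebra_simps)
  finally show ?thesis .
qed

definition B1 :: "nat \<Rightarrow> real mat" where
  "B1 m = mat 3 3 (\<lambda>(i,j). Bm (2*m+1) $$ (i,j))"

lemma B1_e: assumes "m > 0" "i < 3" "j < 3"
  shows "B1 m $$ (i,j) = (\<Sum>k<2*m+1. L i (tv k) * (tv k + tv j)^2)"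
  using assms unfolding B1_def Bm_def by simp

lemma B1_entries: assumes "m > 0" shows
  "B1 m $$ (0,0) = sP m - sQ m" "B1 m $$ (0,1) = real (2*m+1) - sQ m" "B1 m $$ (0,2) = real (2*m+1) - sQ m"
  "B1 m $$ (1,0) = sQ m/2" "B1 m $$ (1,1) = (3*sP m + sQ m)/2" "B1 m $$ (1,2) = (sQ m - sP m)/2"
  "B1 m $$ (2,0) = sQ m/2" "B1 m $$ (2,1) = (sQ m - sP m)/2" "B1 m $$ (2,2) = (3*sP m + sQ m)/2"
proof -
  have z: "(0::nat) < 3" "(1::nat) < 3" "(2::nat) < 3" by auto
  show "B1 m $$ (0,0) = sP m - sQ m" by (simp only: B1_e[OF assms z(1) z(1)] sumL0 tv_0) simp
  show "B1 m $$ (0,1) = real (2*m+1) - sQ m" by (simp only: B1_e[OF assms z(1) z(2)] sumL0 tv_1) simp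
  show "B1 m $$ (0,2) = real (2*m+1) - sQ m" by (simp only: B1_e[OF assms z(1) z(3)] sumL0 tv_2) simp
  show "B1 m $$ (1,0) = sQ m/2" by (simp only: B1_e[OF assms z(2) z(1)] sumL1 tv_0) simp
  show "B1 m $$ (1,1) = (3*sP m + sQ m)/2" by (simp only: B1_e[OF assms z(2) z(2)] sumL1 tv_1) (simp add: field_simps)
  show "B1 m $$ (1,2) = (sQ m - sP m)/2" by (simp only: B1_e[OF assms z(2) z(3)] sumL1 tv_2) (simp add: field_simps)
  show "B1 m $$ (2,0) = sQ m/2" by (simp only: B1_e[OF assms z(3) z(1)] sumL2 tv_0) simp
  show "B1 m $$ (2,1) = (sQ m - sP m)/2" by (simp only: B1_e[OF assms z(3) z(2)] sumL2 tv_1) (simp add: field_simps)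
  show "B1 m $$ (2,2) = (3*sP m + sQ m)/2" by (simp only: B1_e[OF assms z(3) z(3)] sumL2 tv_2) (simp add: field_simps)
qed

lemma sQ_nonneg: "sQ m \<ge> 0" unfolding sQ_def by (auto intro: sum_nonneg)

definition r1 :: "nat \<Rightarrow> real" where "r1 m = sP m - sqrt (real (2*m+1) * sQ m)"
definition r2 :: "nat \<Rightarrow> real" where "r2 m = sP m + sqrt (real (2*m+1) * sQ m)"

lemma char_poly_B1: assumes "m > 0"
  shows "char_poly (B1 m) = [:-(2*sP m),1:] * [:-r1 m,1:] * [:-r2 m,1:]"
proof -
  have c: "B1 m \<in> carrier_mat 3 3" by (simp add: B1_def)
  have cm: "- char_matrix (B1 m) x \<in> carrier_mat 3 3" for x using c by (simp add: char_matrix_def)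
  have ent: "(- char_matrix (B1 m) x) $$ (i,j) = (if i = j then x else 0) - B1 m $$ (i,j)" if "i < 3" "j < 3" for i j x
    using that c by (simp add: char_matrix_def)
  have sq: "sqrt (real (2*m+1) * sQ m)^2 = real (2*m+1) * sQ m" using sQ_nonneg by simp
  have "poly (char_poly (B1 m)) x = poly ([:-(2*sP m),1:] * [:-r1 m,1:] * [:-r2 m,1:]) x" for x
  proof -
    have "poly (char_poly (B1 m)) x = det (- char_matrix (B1 m) x)" by (rule char_poly_matrix[OF c])
    also have "\<dots> = (x - 2*sP m) * ((x - sP m)^2 - real (2*m+1) * sQ m)"
    proof -
    have E1: "(- char_matrix (B1 m) x) $$ (0,0) = x - (sP m - sQ m)" using ent[of 0 0 x] B1_entries(1)[OF assms] by simp
    have E2: "(- char_matrix (B1 m) x) $$ (0,1) = 0 - (real (2*m+1) - sQ m)" using ent[of 0 1 x] B1_entries(2)[OF assms] by simp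
    have E3: "(- char_matrix (B1 m) x) $$ (0,2) = 0 - (real (2*m+1) - sQ m)" using ent[of 0 2 x] B1_entries(3)[OF assms] by simp
    have E4: "(- char_matrix (B1 m) x) $$ (1,0) = 0 - (sQ m/2)" using ent[of 1 0 x] B1_entries(4)[OF assms] by simp
    have E5: "(- char_matrix (B1 m) x) $$ (1,1) = x - ((3*sP m + sQ m)/2)" using ent[of 1 1 x] B1_entries(5)[OF assms] by simp
    have E6: "(- char_matrix (B1 m) x) $$ (1,2) = 0 - ((sQ m - sP m)/2)" using ent[of 1 2 x] B1_entries(6)[OF assms] by simp
    have E7: "(- char_matrix (B1 m) x) $$ (2,0) = 0 - (sQ m/2)" using ent[of 2 0 x] B1_entries(7)[OF assms] by simp
    have E8: "(- char_matrix (B1 m) x) $$ (2,1) = 0 - ((sQ m - sP m)/2)" using ent[of 2 1 x] B1_entries(8)[OF assms] by simp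
    have E9: "(- char_matrix (B1 m) x) $$ (2,2) = x - ((3*sP m + sQ m)/2)" using ent[of 2 2 x] B1_entries(9)[OF assms] by simp
    have "det (- char_matrix (B1 m) x) = (x - 2*sP m) * ((x - sP m)^2 - real (2*m+1) * sQ m)"
      unfolding det3[OF cm] E1 E2 E3 E4 E5 E6 E7 E8 E9 by (simp add: power2_eq_square field_simps)
    then show ?thesis by simp
    qed
    also have "\<dots> = (x - 2*sP m) * ((x - r1 m) * (x - r2 m))"
      unfolding r1_def r2_def using sq by (simp add: power2_eq_square algebra_simps)
    also have "\<dots> = poly ([:-(2*sP m),1:] * [:-r1 m,1:] * [:-r2 m,1:]) x" by (simp add: algebra_simps)
    finally show ?thesis .
  qed
  then show ?thesis using poly_eq_poly_eq_iff by blast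
qed

definition B3 :: "nat \<Rightarrow> real mat" where
  "B3 m = mat (2*m-2) 3 (\<lambda>(i,j). Bm (2*m+1) $$ (i+3, j))"

lemma Bm_block: assumes "m > 0"
  shows "Bm (2*m+1) = four_block_mat (B1 m) (0\<^sub>m 3 (2*m-2)) (B3 m) (0\<^sub>m (2*m-2) (2*m-2))"
  (is "_ = ?F")
proof (rule eq_matI)
  have d: "3 + (2*m-2) = 2*m+1" using assms by auto
  show "dim_row (Bm (2*m+1)) = dim_row ?F" "dim_col (Bm (2*m+1)) = dim_col ?F"
    using d by (auto simp: Bm_def B1_def)
  fix i j assume "i < dim_row ?F" "j < dim_col ?F"
  then have ij: "i < 2*m+1" "j < 2*m+1" using d by (auto simp: B1_def)
  have F: "?F $$ (i,j) = (if i < 3 then if j < 3 then B1 m $$ (i,j) else 0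
      else if j < 3 then Bm (2*m+1) $$ (i, j) else 0)"
    using ij d by (subst index_mat_four_block) (auto simp: B1_def B3_def)
  have z: "Bm (2*m+1) $$ (i,j) = 0" if "\<not> j < 3" using ij that by (simp add: Bm_def)
  have b: "B1 m $$ (i,j) = Bm (2*m+1) $$ (i,j)" if "i < 3" "j < 3" using that by (simp add: B1_def)
  show "Bm (2*m+1) $$ (i,j) = ?F $$ (i,j)"
    unfolding F using z b by auto
qed

lemma char_poly_A: assumes "m > 0"
  shows "char_poly (Amat m) = ([:-(2*sP m),1:] * [:-r1 m,1:] * [:-r2 m,1:]) * [:0,1:]^(2*m-2)"
proof -
  have "char_poly (Amat m) = char_poly (Bm (2*m+1))" by (rule char_poly_similar[OF sim[OF assms]])
  also have "\<dots> = char_poly (B1 m) * char_poly (0\<^sub>m (2*m-2) (2*m-2) :: real mat)"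
    unfolding Bm_block[OF assms] by (rule char_poly_block) (auto simp: B1_def B3_def)
  also have "\<dots> = ([:-(2*sP m),1:] * [:-r1 m,1:] * [:-r2 m,1:]) * [:0,1:]^(2*m-2)"
    unfolding char_poly_B1[OF assms] char_poly_zero ..
  finally show ?thesis .
qed

lemma key_ineq: assumes "m > 0" shows "sP m ^2 < real (2*m+1) * sQ m"
proof -
  have "real (2*m+1) * sQ m - sP m ^2 = (2*real m+1)^2*real m*(real m+1)*(4*(real m)^2+4*real m-3)/45"
    unfolding sP_def sQ_def S2 S4 by (simp add: power2_eq_square field_simps)
  moreover have "(2*real m+1)^2*real m*(real m+1)*(4*(real m)^2+4*real m-3)/45 > 0"
  proof -
    have "real m \<ge> 1" using assms by auto
    moreover have "real m \<le> (real m)^2" using \<open>real m \<ge> 1\<close> by (simp add: power2_eq_square)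
    ultimately have "4*(real m)^2+4*real m-3 > 0" by linarith
    then show ?thesis using assms by (auto intro!: mult_pos_pos divide_pos_pos)
  qed
  ultimately show ?thesis by linarith
qed

lemma sP_pos: "m > 0 \<Longrightarrow> sP m > 0"
  unfolding sP_def S2 by auto

lemma r1_neg: assumes "m > 0" shows "r1 m < 0"
proof -
  have "sP m < sqrt (real (2*m+1) * sQ m)"
    using key_ineq[OF assms] sP_pos[OF assms] real_less_rsqrt by blast
  then show ?thesis unfolding r1_def by simp
qed

lemma r2_pos: assumes "m > 0" shows "r2 m > 0"
proof -
  have "sqrt (real (2*m+1) * sQ m) \<ge> 0" using sQ_nonneg[of m] by simp
  then show ?thesis using sP_pos[OF assms] unfolding r2_def by linarith
qed

lemma order_lin: "order a [:-c,1:] = (if c = a then 1 else (0::nat))" for a c :: real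
proof (cases "c = a")
  case True
  then show ?thesis using order_power_n_n[of a 1] by simp
next
  case False
  then show ?thesis by (auto intro!: order_0I)
qed

lemma num_neg: assumes "m > 0" shows "num_neg_eigenvalues (Amat m) = 1"
proof -
  let ?p = "([:-(2*sP m),1:] * [:-r1 m,1:] * [:-r2 m,1:]) * [:0,1:]^(2*m-2) :: real poly"
  have cp: "char_poly (Amat m) = ?p" by (rule char_poly_A[OF assms])
  have ev: "eigenvalue (Amat m) x \<longleftrightarrow> poly ?p x = 0" for x
    using eigenvalue_root_char_poly[OF Amat_carrier] cp by simp
  have "{x. x < 0 \<and> eigenvalue (Amat m) x} = {r1 m}"
  proof -
    have lin: "poly [:-c,1:] x = x - c" for c x :: real by simp
    have lin0: "poly [:0,1:] x = x" for x :: real by simp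
    have "x < 0 \<and> poly ?p x = 0 \<longleftrightarrow> x = r1 m" for x
      unfolding poly_mult poly_power lin lin0
      using sP_pos[OF assms] r1_neg[OF assms] r2_pos[OF assms] by auto
    then show ?thesis using ev by auto
  qed
  moreover have "order (r1 m) ?p = 1"
  proof -
    have nz: "[:c,1:] \<noteq> (0::real poly)" for c by simp
    have o0: "order (r1 m) ([:0,1:]^(2*m-2)) = 0"
      using r1_neg[OF assms] by (intro order_0I) simp
    let ?a = "[:-(2*sP m),1:] :: real poly" let ?b = "[:-r1 m,1:] :: real poly" let ?c = "[:-r2 m,1:] :: real poly"
    let ?d = "[:0,1:]^(2*m-2) :: real poly"
    have na: "?a \<noteq> 0" "?b \<noteq> 0" "?c \<noteq> 0" "?d \<noteq> 0" by auto
    have "order (r1 m) ?p = order (r1 m) (?a*?b*?c) + order (r1 m) ?d"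
      by (rule order_mult) (insert na, simp only: mult_eq_0_iff, blast)
    also have "order (r1 m) (?a*?b*?c) = order (r1 m) (?a*?b) + order (r1 m) ?c"
      by (rule order_mult) (insert na, simp only: mult_eq_0_iff, blast)
    also have "order (r1 m) (?a*?b) = order (r1 m) ?a + order (r1 m) ?b"
      by (rule order_mult) (insert na, simp only: mult_eq_0_iff, blast)
    finally have "order (r1 m) ?p = order (r1 m) [:-(2*sP m),1:] + order (r1 m) [:-r1 m,1:] + order (r1 m) [:-r2 m,1:]
        + order (r1 m) ([:0,1:]^(2*m-2))" .
    also have "\<dots> = 1" unfolding o0 order_lin
      using sP_pos[OF assms] r1_neg[OF assms] r2_pos[OF assms] by auto
    finally show ?thesis .
  qed
  ultimately show ?thesis unfolding num_neg_eigenvalues_def cp by simp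
qed

theorem mainTheorem1:
  fixes N :: nat
  assumes "N > 0"
  shows "\<exists>(A :: real mat) n. A \<in> carrier_mat n n \<and> A\<^sup>T = A \<and> nonneg_mat A \<and>
           real_rank A = 3 \<and> num_neg_eigenvalues A = 1 \<and> nonneg_rank A > N"
proof -
  define m :: nat where "m = 2^N"
  have m0: "m > 0" unfolding m_def by simp
  let ?A = "Amat m" let ?n = "2*m+1"
  have c: "?A \<in> carrier_mat ?n ?n" by (rule Amat_carrier)
  have tr: "?A\<^sup>T = ?A"
    by (rule eq_matI) (auto simp: Amat_def add.commute)
  have nn: "nonneg_mat ?A" unfolding nonneg_mat_def by (auto simp: Amat_def)
  have rk: "real_rank ?A = 3" unfolding real_rank_def
    using rank_le3[of m] rank_ge3[OF m0] by (simp add: Amat_def)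
  define Pr where "Pr r = (\<exists>U V. U \<in> carrier_mat (dim_row ?A) r \<and> V \<in> carrier_mat r (dim_col ?A)
      \<and> nonneg_mat U \<and> nonneg_mat V \<and> ?A = U * V)" for r
  have "Pr ?n" unfolding Pr_def
  proof (intro exI conjI)
    show "?A \<in> carrier_mat (dim_row ?A) ?n" using c by simp
    show "1\<^sub>m ?n \<in> carrier_mat ?n (dim_col ?A)" using c by simp
    show "nonneg_mat ?A" by (rule nn)
    show "nonneg_mat (1\<^sub>m ?n :: real mat)" unfolding nonneg_mat_def by auto
    show "?A = ?A * 1\<^sub>m ?n" using right_mult_one_mat[OF c] by simp
  qed
  then have "Pr (Least Pr)" by (rule LeastI)
  then obtain U V where U0: "U \<in> carrier_mat (dim_row ?A) (Least Pr)" and V0: "V \<in> carrier_mat (Least Pr) (dim_col ?A)"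
    and nU: "nonneg_mat U" and nV: "nonneg_mat V" and eq: "?A = U * V"
    unfolding Pr_def by blast
  have dr: "dim_row ?A = ?n" "dim_col ?A = ?n" using c by auto
  have U: "U \<in> carrier_mat ?n (Least Pr)" using U0 unfolding dr .
  have V: "V \<in> carrier_mat (Least Pr) ?n" using V0 unfolding dr .
  have b: "?n \<le> 2 ^ Least Pr" by (rule nr_bound[OF U V nU nV eq])
  have nr: "nonneg_rank ?A = Least Pr" unfolding nonneg_rank_def Pr_def ..
  have "N < Least Pr"
  proof (rule ccontr)
    assume "\<not> N < Least Pr"
    then have p: "(2::nat) ^ Least Pr \<le> 2 ^ N" by (intro power_increasing) auto
    have "2*m+1 \<le> 2^N" using b p by (rule order.trans)
    moreover have "(2::nat)^N < 2*m+1" unfolding m_def by simp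
    ultimately show False by linarith
  qed
  then have "N < nonneg_rank ?A" unfolding nr .
  then show ?thesis
    by (intro exI[of _ ?A] exI[of _ ?n] conjI c tr nn rk num_neg[OF m0])
qed

end
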